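(* Let $p,q\ge 3$ be relatively prime odd integers with $q\equiv\pm1\pmod p$. Then $$\sum_{\substack{n=1\\ p\nmid n,\ q\nmid n}}^{pq-1}\frac{\cot(\pi n/p)\cot(\pi n/q)}{\cos^2(\pi n/(pq))}=\begin{cases}\dfrac{2}{p}(p^2-1)(q-1), & q\equiv 1\pmod p,\\[2mm] \dfrac{2}{p}(p^2-1)(q+1), & q\equiv -1\pmod p.\end{cases}$$ *)

theory Defs
  imports "HOL-Analysis.Analysis" "HOL-Number_Theory.Cong"
begin

end

theory Submission
  imports Defs
begin


lemma orth_root:
  fixes \<zeta> :: complex
  assumes "\<zeta> ^ M = 1" and "\<And>j. 0 < j \<Longrightarrow> j < M \<Longrightarrow> \<zeta> ^ j \<noteq> 1" and "j < M"
  shows "(\<Sum>i<M. (\<zeta> ^ j) ^ i) = (if j = 0 then of_nat M else 0)"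
proof (cases "j = 0")
  case True then show ?thesis by simp
next
  case False
  have ne: "1 - \<zeta> ^ j \<noteq> 0" using assms(2)[of j] False assms(3) by auto
  have "(1 - \<zeta> ^ j) * (\<Sum>i<M. (\<zeta> ^ j) ^ i) = 1 - (\<zeta>^j)^M"
    by (simp add: one_diff_power_eq)
  also have "(\<zeta>^j)^M = 1" by (metis assms(1) power_mult power_mult_distrib power_one mult.commute)
  finally show ?thesis using ne False by simp
qed

lemma orth_sum:
  fixes \<zeta> c :: complex
  assumes "\<zeta> ^ M = 1" and "\<And>j. 0 < j \<Longrightarrow> j < M \<Longrightarrow> \<zeta> ^ j \<noteq> 1"
  shows "(\<Sum>i<M. \<Sum>j<M. g j * (c * \<zeta>^i)^j) = of_nat M * g 0"
proof -
  have "(\<Sum>i<M. \<Sum>j<M. g j * (c * \<zeta>^i)^j) = (\<Sum>j<M. g j * c^j * (\<Sum>i<M. (\<zeta>^j)^i))"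
    by (subst sum.swap) (simp add: sum_distrib_left power_mult_distrib mult.assoc flip: power_mult, simp add: mult.commute power_mult)
  also have "\<dots> = (\<Sum>j<M. if j = 0 then g 0 * of_nat M else 0)"
    by (rule sum.cong) (auto simp: orth_root[OF assms])
  also have "\<dots> = (if 0 < M then g 0 * of_nat M else 0)"
    by (simp add: sum.delta)
  finally show ?thesis by auto
qed


lemma poly_jsum:
  fixes v :: complex
  shows "(1 - v)^2 * (\<Sum>j<M. of_nat j * v^j) = v - of_nat M * v^M + (of_nat M - 1) * v^(Suc M)"
proof (induction M)
  case 0 then show ?case by simp
next
  case (Suc M)
  have "(1 - v)^2 * (\<Sum>j<Suc M. of_nat j * v^j) = (1 - v)^2 * (\<Sum>j<M. of_nat j * v^j) + (1-v)^2 * of_nat M * v^M"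
    by (simp add: algebra_simps)
  also have "\<dots> = v - of_nat M * v^M + (of_nat M - 1) * v^(Suc M) + (1-v)^2 * of_nat M * v^M"
    using Suc by simp
  also have "\<dots> = v - of_nat (Suc M) * v^(Suc M) + (of_nat (Suc M) - 1) * v^(Suc (Suc M))"
    by (simp add: algebra_simps power2_eq_square)
  finally show ?case .
qed

locale rootsys =
  fixes \<zeta> :: complex and M :: nat
  assumes zM: "\<zeta> ^ M = 1" and zj: "\<And>j. 0 < j \<Longrightarrow> j < M \<Longrightarrow> \<zeta> ^ j \<noteq> 1" and Mpos: "0 < M"
begin

lemma vpow: "(c * \<zeta>^i)^M = c^M"
  by (simp add: power_mult_distrib flip: power_mult) (simp add: mult.commute power_mult zM)

lemma L0:
  assumes V: "c^M \<noteq> 1"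
  shows "(\<Sum>i<M. 1 / (1 - c * \<zeta>^i)) = of_nat M / (1 - c^M)"
proof -
  have V': "1 - c^M \<noteq> 0" using V by simp
  have "1 / (1 - c * \<zeta>^i) = (\<Sum>j<M. 1/(1 - c^M) * (c * \<zeta>^i)^j)" for i
  proof -
    define v where "v = c * \<zeta>^i"
    define S where "S = (\<Sum>j<M. v^j)"
    have e: "1 - c^M = (1 - v) * S"
      using one_diff_power_eq[of v M] vpow[of c i] unfolding v_def S_def by simp
    have ne: "1 - v \<noteq> 0" "S \<noteq> 0" using e V' by auto
    have "1 / (1 - v) = S / (1 - c^M)" using e ne by simp
    also have "\<dots> = (\<Sum>j<M. 1/(1 - c^M) * v^j)" unfolding S_def by (simp add: sum_divide_distrib)
    finally show ?thesis unfolding v_def .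
  qed
  then have "(\<Sum>i<M. 1 / (1 - c * \<zeta>^i)) = (\<Sum>i<M. \<Sum>j<M. 1/(1 - c^M) * (c * \<zeta>^i)^j)" by simp
  also have "\<dots> = of_nat M * (1/(1 - c^M))" by (rule orth_sum[OF zM zj])
  finally show ?thesis by simp
qed

lemma L1:
  assumes V: "c^M \<noteq> 1"
  shows "(\<Sum>i<M. c * \<zeta>^i / (1 - c * \<zeta>^i)^2) = of_nat M ^ 2 * c^M / (1 - c^M)^2"
proof -
  define K where "K = of_nat M * c^M / (1 - c^M)"
  have V': "1 - c^M \<noteq> 0" using V by simp
  have "c * \<zeta>^i / (1 - c * \<zeta>^i)^2 = (\<Sum>j<M. (of_nat j + K)/(1 - c^M) * (c * \<zeta>^i)^j)" for i
  proof -
    define v where "v = c * \<zeta>^i"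
    have vM: "v^M = c^M" unfolding v_def by (rule vpow)
    have e: "1 - c^M = (1 - v) * (\<Sum>j<M. v^j)"
      using one_diff_power_eq[of v M] vM by simp
    have ne: "1 - v \<noteq> 0" using e V' by auto
    have p: "(1 - v)^2 * (\<Sum>j<M. of_nat j * v^j) = v - of_nat M * c^M + (of_nat M - 1) * c^M * v"
      using poly_jsum[of v M] vM by (simp add: algebra_simps)
    have "(\<Sum>j<M. (of_nat j + K) * v^j) = (\<Sum>j<M. of_nat j * v^j) + K * (\<Sum>j<M. v^j)"
      by (simp add: algebra_simps sum.distrib sum_distrib_left)
    then have "(1 - v)^2 * (\<Sum>j<M. (of_nat j + K) * v^j) = (1 - v)^2 * (\<Sum>j<M. of_nat j * v^j) + K * ((1-v) * ((1 - v) * (\<Sum>j<M. v^j)))"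
      by (simp add: algebra_simps power2_eq_square)
    also have "\<dots> = v - of_nat M * c^M + (of_nat M - 1) * c^M * v + K * ((1 - v) * (1 - c^M))"
      using p e by simp
    also have "\<dots> = v * (1 - c^M)"
      using V' unfolding K_def by (simp add: field_simps)
    finally have "(1 - v)^2 * (\<Sum>j<M. (of_nat j + K) * v^j) = v * (1 - c^M)" .
    then have "v / (1 - v)^2 = (\<Sum>j<M. (of_nat j + K) * v^j) / (1 - c^M)"
      using ne V' by (simp add: field_simps)
    then show ?thesis unfolding v_def by (simp add: sum_divide_distrib mult.commute)
  qed
  then have "(\<Sum>i<M. c * \<zeta>^i / (1 - c * \<zeta>^i)^2) = (\<Sum>i<M. \<Sum>j<M. (of_nat j + K)/(1 - c^M) * (c * \<zeta>^i)^j)" by simp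
  also have "\<dots> = of_nat M * ((of_nat 0 + K)/(1 - c^M))" by (rule orth_sum[OF zM zj])
  finally show ?thesis unfolding K_def using V' by (simp add: power2_eq_square)
qed

end


lemma E1: "1 - cis (2*t) = - 2 * \<i> * complex_of_real (sin t) * cis t"
  using cos_double_sin[of t] sin_double[of t] by (simp add: complex_eq_iff power2_eq_square algebra_simps)
lemma E2: "1 + cis (2*t) = 2 * complex_of_real (cos t) * cis t"
  using cos_double_cos[of t] sin_double[of t] by (simp add: complex_eq_iff power2_eq_square algebra_simps)

lemma cot_conv:
  assumes "1 - cis (2*t) \<noteq> 0"
  shows "complex_of_real (cot t) = - \<i> * (2 / (1 - cis (2*t)) - 1)"
proof -
  have s: "sin t \<noteq> 0" using assms E1[of t] by auto
  have c: "cis t \<noteq> 0" by (simp add: cis_neq_zero)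
  have "2 / (1 - cis (2*t)) - 1 = (1 + cis(2*t)) / (1 - cis (2*t))"
    using assms by (simp add: field_simps)
  also have "\<dots> = \<i> * complex_of_real (cos t / sin t)"
    unfolding E1 E2 using s c by (simp add: field_simps)
  finally show ?thesis by (simp add: cot_def)
qed

lemma tan_conv:
  assumes "1 - (- cis (2*t)) \<noteq> 0"
  shows "complex_of_real (tan t) = \<i> * (2 / (1 - (- cis (2*t))) - 1)"
proof -
  have s: "cos t \<noteq> 0" using assms E2[of t] by auto
  have c: "cis t \<noteq> 0" by (simp add: cis_neq_zero)
  have "2 / (1 - (- cis (2*t))) - 1 = (1 - cis(2*t)) / (1 + cis (2*t))"
    using assms by (simp add: field_simps)
  also have "\<dots> = - \<i> * complex_of_real (sin t / cos t)"
    unfolding E1 E2 using s c by (simp add: field_simps)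
  finally show ?thesis by (simp add: tan_def)
qed

lemma sec_conv:
  assumes "1 - (- cis (2*t)) \<noteq> 0"
  shows "complex_of_real (1 / (cos t)^2) = - 4 * (- cis (2*t)) / (1 - (- cis (2*t)))^2"
proof -
  have s: "cos t \<noteq> 0" using assms E2[of t] by auto
  have c: "cis t \<noteq> 0" by (simp add: cis_neq_zero)
  have cc: "cis (2*t) = cis t ^ 2" by (subst Complex.DeMoivre) simp
  have "- 4 * (- cis (2*t)) / (1 - (- cis (2*t)))^2 = 4 * cis (2*t) / (1 + cis (2*t))^2" by simp
  also have "\<dots> = 4 * cis (2*t) / (2 * complex_of_real (cos t) * cis t)^2" by (simp only: E2)
  also have "\<dots> = 4 * cis t^2 / (2 * complex_of_real (cos t) * cis t)^2" by (simp only: cc)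
  also have "\<dots> = complex_of_real (1 / (cos t)^2)" using s c by (simp add: field_simps power2_eq_square)
  finally show ?thesis by simp
qed

lemma rootsys_cis: assumes "0 < M" shows "rootsys (cis (2*pi/M)) M"
proof
  show "cis (2 * pi / real M) ^ M = 1" unfolding Complex.DeMoivre using assms by simp
  show "0 < M" by fact
  fix j assume j: "0 < j" "j < M"
  show "cis (2 * pi / real M) ^ j \<noteq> 1"
  proof
    assume "cis (2 * pi / real M) ^ j = 1"
    then have "cos (real j * (2 * pi / real M)) = 1" unfolding Complex.DeMoivre by (simp add: complex_eq_iff)
    then obtain n :: int where n: "real j * (2 * pi / real M) = n * 2 * pi" by (auto simp: cos_one_2pi_int)
    then have "real j = n * real M" using assms by (simp add: field_simps)
    then have "int j = n * int M" by (metis of_int_eq_iff of_int_mult of_int_of_nat_eq)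
    show False
    proof (cases "n \<le> 0")
      case True
      then have "n * int M \<le> 0" by (simp add: mult_nonpos_nonneg)
      then show False using j \<open>int j = n * int M\<close> by linarith
    next
      case False
      then have "n * int M \<ge> 1 * int M" by (intro mult_right_mono) auto
      then show False using j \<open>int j = n * int M\<close> by linarith
    qed
  qed
qed

lemma cis_shift: "cis (2 * (\<theta> + pi * real i / real M)) = cis (2*\<theta>) * cis (2*pi/M) ^ i"
  by (simp add: Complex.DeMoivre cis_mult algebra_simps)

lemma cis_pow: "cis (2*\<theta>) ^ M = cis (2 * (real M * \<theta>))"
  by (simp add: Complex.DeMoivre algebra_simps)

lemma sum_helper:
  fixes f :: "nat \<Rightarrow> complex"
  shows "(\<Sum>i<M. a * (2 * f i - 1)) = a * (2 * (\<Sum>i<M. f i) - of_nat M)"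
proof -
  have "(\<Sum>i<M. a * (2 * f i - 1)) = a * (\<Sum>i<M. (2 * f i - 1))" by (simp add: sum_distrib_left)
  also have "(\<Sum>i<M. (2 * f i - 1)) = (\<Sum>i<M. 2 * f i) - of_nat M" by (simp add: sum_subtractf)
  also have "(\<Sum>i<M. 2 * f i) = 2 * (\<Sum>i<M. f i)" by (simp add: sum_distrib_left)
  finally show ?thesis .
qed

lemma K1:
  assumes M: "0 < M" and s: "sin (real M * \<theta>) \<noteq> 0"
  shows "(\<Sum>i<M. cot (\<theta> + pi * real i / real M)) = real M * cot (real M * \<theta>)"
proof -
  interpret rootsys "cis (2*pi/M)" M by (rule rootsys_cis[OF M])
  define c where "c = cis (2*\<theta>)"
  define z where "z = cis (2*pi/M)"
  have W: "1 - c^M \<noteq> 0" unfolding c_def cis_pow E1 using s by (simp add: cis_neq_zero)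
  have Wn: "c^M \<noteq> 1" using W by simp
  have t: "complex_of_real (cot (\<theta> + pi * real i / real M)) = - \<i> * (2 * (1 / (1 - c * z ^ i)) - 1)" for i
  proof -
    have "1 - c * z ^ i \<noteq> 0"
    proof
      assume "1 - c * z ^ i = 0"
      then have "c * z^i = 1" by simp
      then have "c^M = 1" using vpow[of c i] unfolding z_def by simp
      with Wn show False ..
    qed
    then show ?thesis using cot_conv[of "\<theta> + pi * real i / real M"] unfolding cis_shift c_def z_def by simp
  qed
  have "complex_of_real (\<Sum>i<M. cot (\<theta> + pi * real i / real M)) = (\<Sum>i<M. - \<i> * (2 * (1 / (1 - c * z ^ i)) - 1))"
    by (simp only: of_real_sum t)
  also have "\<dots> = - \<i> * (2 * (\<Sum>i<M. 1 / (1 - c * z ^ i)) - of_nat M)"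
    by (rule sum_helper)
  also have "(\<Sum>i<M. 1 / (1 - c * z ^ i)) = of_nat M / (1 - c^M)" unfolding z_def by (rule L0[OF Wn])
  also have "- \<i> * (2 * (of_nat M / (1 - c^M)) - of_nat M) = of_nat M * (- \<i> * (2 / (1 - c^M) - 1))" by (simp add: algebra_simps)
  also have "\<dots> = complex_of_real (real M * cot (real M * \<theta>))"
    using cot_conv[of "real M * \<theta>"] W unfolding c_def cis_pow by simp
  finally show ?thesis by (simp only: of_real_eq_iff)
qed


lemma K23:
  assumes M: "odd M" and s: "cos (real M * \<theta>) \<noteq> 0"
  shows "(\<Sum>i<M. tan (\<theta> + pi * real i / real M)) = real M * tan (real M * \<theta>)"
    and "(\<Sum>i<M. 1 / (cos (\<theta> + pi * real i / real M))^2) = (real M)^2 * (1 / (cos (real M * \<theta>))^2)"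
proof -
  have M0: "0 < M" using M by (cases M) auto
  interpret rootsys "cis (2*pi/M)" M by (rule rootsys_cis[OF M0])
  define c where "c = - cis (2*\<theta>)"
  define z where "z = cis (2*pi/M)"
  have cM: "c^M = - cis (2 * (real M * \<theta>))" unfolding c_def using M by (simp add: power_minus_odd cis_pow)
  have W: "1 - c^M \<noteq> 0" unfolding cM using E2[of "real M * \<theta>"] s by (simp add: cis_neq_zero)
  have Wn: "c^M \<noteq> 1" using W by simp
  have ne: "1 - c * z ^ i \<noteq> 0" for i
  proof
    assume "1 - c * z ^ i = 0"
    then have "c * z^i = 1" by simp
    then have "c^M = 1" using vpow[of c i] unfolding z_def by simp
    with Wn show False ..
  qed
  have sh: "- cis (2 * (\<theta> + pi * real i / real M)) = c * z^i" for i
    unfolding cis_shift c_def z_def by simp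
  have t: "complex_of_real (tan (\<theta> + pi * real i / real M)) = \<i> * (2 * (1 / (1 - c * z ^ i)) - 1)" for i
    using tan_conv[of "\<theta> + pi * real i / real M"] ne[of i] unfolding sh by simp
  have "complex_of_real (\<Sum>i<M. tan (\<theta> + pi * real i / real M)) = (\<Sum>i<M. \<i> * (2 * (1 / (1 - c * z ^ i)) - 1))"
    by (simp only: of_real_sum t)
  also have "\<dots> = \<i> * (2 * (\<Sum>i<M. 1 / (1 - c * z ^ i)) - of_nat M)"
    by (rule sum_helper)
  also have "(\<Sum>i<M. 1 / (1 - c * z ^ i)) = of_nat M / (1 - c^M)" unfolding z_def by (rule L0[OF Wn])
  also have "\<i> * (2 * (of_nat M / (1 - c^M)) - of_nat M) = of_nat M * (\<i> * (2 / (1 - c^M) - 1))" by (simp add: algebra_simps)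
  also have "\<dots> = complex_of_real (real M * tan (real M * \<theta>))"
    using tan_conv[of "real M * \<theta>"] W unfolding cM by simp
  finally show "(\<Sum>i<M. tan (\<theta> + pi * real i / real M)) = real M * tan (real M * \<theta>)" by (simp only: of_real_eq_iff)
  have t2: "complex_of_real (1 / (cos (\<theta> + pi * real i / real M))^2) = - 4 * (c * z ^ i / (1 - c * z ^ i)^2)" for i
    using sec_conv[of "\<theta> + pi * real i / real M"] ne[of i] unfolding sh by simp
  have "complex_of_real (\<Sum>i<M. 1 / (cos (\<theta> + pi * real i / real M))^2) = (\<Sum>i<M. - 4 * (c * z ^ i / (1 - c * z ^ i)^2))"
    by (simp only: of_real_sum t2)
  also have "\<dots> = - 4 * (\<Sum>i<M. c * z ^ i / (1 - c * z ^ i)^2)" by (simp add: sum_distrib_left)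
  also have "(\<Sum>i<M. c * z ^ i / (1 - c * z ^ i)^2) = of_nat M ^ 2 * c^M / (1 - c^M)^2" unfolding z_def by (rule L1[OF Wn])
  also have "- 4 * (of_nat M ^ 2 * c^M / (1 - c^M)^2) = of_nat M ^ 2 * (- 4 * c^M / (1 - c^M)^2)" by (simp add: algebra_simps)
  also have "\<dots> = complex_of_real ((real M)^2 * (1 / (cos (real M * \<theta>))^2))"
    using sec_conv[of "real M * \<theta>"] W unfolding cM by (simp add: times_divide_eq_right[symmetric] del: times_divide_eq_right)
  finally show "(\<Sum>i<M. 1 / (cos (\<theta> + pi * real i / real M))^2) = (real M)^2 * (1 / (cos (real M * \<theta>))^2)" by (simp only: of_real_eq_iff)
qed


lemma sum_int_nat: "(\<Sum>i\<in>{0..<int M}. g i) = (\<Sum>i<M. g (int i))"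
proof -
  have "{0..<int M} = int ` {..<M}" using image_int_atLeastLessThan[of 0 M] by (simp add: lessThan_atLeast0)
  then show ?thesis by (simp add: sum.reindex)
qed

lemma K1i:
  assumes m: "0 < m" and s: "sin (real_of_int m * \<theta>) \<noteq> 0"
  shows "(\<Sum>i\<in>{0..<m}. cot (\<theta> + pi * real_of_int i / real_of_int m)) = real_of_int m * cot (real_of_int m * \<theta>)"
proof -
  obtain M where M: "m = int M" "0 < M" using m by (metis pos_int_cases)
  show ?thesis using K1[of M \<theta>] s M by (simp add: sum_int_nat)
qed

lemma K2i:
  assumes m: "odd m" "0 < m" and s: "cos (real_of_int m * \<theta>) \<noteq> 0"
  shows "(\<Sum>i\<in>{0..<m}. tan (\<theta> + pi * real_of_int i / real_of_int m)) = real_of_int m * tan (real_of_int m * \<theta>)"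
proof -
  obtain M where M: "m = int M" "0 < M" using m by (metis pos_int_cases)
  have "odd M" using m M by simp
  show ?thesis using K23(1)[OF \<open>odd M\<close>, of \<theta>] s M by (simp add: sum_int_nat)
qed

lemma K3i:
  assumes m: "odd m" "0 < m" and s: "cos (real_of_int m * \<theta>) \<noteq> 0"
  shows "(\<Sum>i\<in>{0..<m}. 1 / (cos (\<theta> + pi * real_of_int i / real_of_int m))^2) = (real_of_int m)^2 * (1 / (cos (real_of_int m * \<theta>))^2)"
proof -
  obtain M where M: "m = int M" "0 < M" using m by (metis pos_int_cases)
  have "odd M" using m M by simp
  show ?thesis using K23(2)[OF \<open>odd M\<close>, of \<theta>] s M by (simp add: sum_int_nat)
qed

lemma reindex_mod:
  fixes f :: "int \<Rightarrow> 'a::comm_monoid_add"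
  assumes m: "0 < m" and cop: "coprime a m" and per: "\<And>x. f x = f (x mod m)"
  shows "(\<Sum>i\<in>{0..<m}. f (c + a*i)) = (\<Sum>i\<in>{0..<m}. f i)"
proof -
  let ?g = "\<lambda>i. (c + a*i) mod m"
  have inj: "inj_on ?g {0..<m}"
  proof
    fix i j assume i: "i \<in> {0..<m}" and j: "j \<in> {0..<m}" and e: "?g i = ?g j"
    then have "m dvd (c + a*i) - (c + a*j)" by (simp add: mod_eq_dvd_iff)
    then have "m dvd a * (i - j)" by (simp add: algebra_simps)
    then have "m dvd (i - j)" using cop by (simp add: coprime_commute coprime_dvd_mult_right_iff)
    then obtain k where k: "i - j = m * k" by (auto elim: dvdE)
    show "i = j"
    proof (cases "k = 0")
      case True then show ?thesis using k by simp
    next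
      case False
      then have "k \<ge> 1 \<or> k \<le> -1" by linarith
      then show ?thesis
      proof
        assume "k \<ge> 1"
        then have "m * k \<ge> m * 1" using m by (intro mult_left_mono) auto
        then show ?thesis using k i j by simp
      next
        assume "k \<le> -1"
        then have "m * k \<le> m * (-1)" using m by (intro mult_left_mono) auto
        then show ?thesis using k i j by simp
      qed
    qed
  qed
  have img: "?g ` {0..<m} = {0..<m}"
  proof -
    have sub: "?g ` {0..<m} \<subseteq> {0..<m}" using m by auto
    have "card (?g ` {0..<m}) = card {0..<m::int}" using inj by (simp add: card_image)
    then show ?thesis using sub by (simp add: card_subset_eq)
  qed
  have "(\<Sum>i\<in>{0..<m}. f (c + a*i)) = (\<Sum>i\<in>{0..<m}. f (?g i))" using per by simp
  also have "\<dots> = (\<Sum>i\<in>?g ` {0..<m}. f i)" using inj by (simp add: sum.reindex)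
  also have "\<dots> = (\<Sum>i\<in>{0..<m}. f i)" using img by simp
  finally show ?thesis .
qed

lemma odd_sum_zero:
  fixes f :: "int \<Rightarrow> real"
  assumes m: "0 < m" and per: "\<And>x. f x = f (x mod m)" and odd: "\<And>x. f (- x) = - f x"
  shows "(\<Sum>i\<in>{0..<m}. f i) = 0"
proof -
  have "(\<Sum>i\<in>{0..<m}. f (0 + (-1)*i)) = (\<Sum>i\<in>{0..<m}. f i)"
    using reindex_mod[of m "-1" f 0, OF m _ per] by simp
  then have "(\<Sum>i\<in>{0..<m}. - f i) = (\<Sum>i\<in>{0..<m}. f i)" using odd by simp
  then show ?thesis by (simp add: sum_negf)
qed


lemma cot_per: "cot (x + of_int k * pi) = cot x"
  by (simp add: cot_altdef)

lemma sin_int_pi: "sin (of_int k * pi) = 0"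
  by (simp add: sin_times_pi_eq_0)

lemma cos_sq_per: "(cos (x + of_int k * pi))^2 = (cos x)^2"
proof -
  have "(cos (of_int k * pi))^2 = 1" using sin_cos_squared_add[of "of_int k * pi"] sin_int_pi[of k] by simp
  then show ?thesis by (simp add: cos_add sin_int_pi power_mult_distrib)
qed

lemma cos_odd_ne:
  assumes "odd d" and "x = pi * of_int a / of_int d"
  shows "cos x \<noteq> 0"
proof
  assume "cos x = 0"
  then obtain i where i: "odd i" "x = of_int i * (pi/2)" by (auto simp: cos_zero_iff_int)
  have d0: "d \<noteq> 0" using assms(1) by auto
  have "pi * of_int a / of_int d = of_int i * (pi/2)" using i assms by simp
  then have "real_of_int (2*a) = real_of_int (i * d)" using d0 by (simp add: field_simps)
  then have "2*a = i*d" by (simp only: of_int_eq_iff)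
  then show False using i(1) assms(1) by (metis even_mult_iff dvd_triv_left)
qed

lemma sin_dvd_iff:
  assumes "d \<noteq> 0"
  shows "sin (pi * of_int a / of_int d) = 0 \<longleftrightarrow> d dvd a"
proof
  assume "sin (pi * of_int a / of_int d) = 0"
  then obtain i :: int where i: "pi * of_int a / of_int d = of_int i * pi" by (auto simp: sin_zero_iff_int2)
  then have "real_of_int a = real_of_int (i * d)" using assms by (simp add: field_simps)
  then have "a = i * d" by (simp only: of_int_eq_iff)
  then show "d dvd a" by simp
next
  assume "d dvd a"
  then obtain i where "a = d * i" by auto
  then have "pi * of_int a / of_int d = of_int i * pi" using assms by simp
  then show "sin (pi * of_int a / of_int d) = 0" by (simp add: sin_int_pi)
qed

lemma cot_plus_tan:
  assumes "sin X \<noteq> 0" "cos B \<noteq> 0"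
  shows "cot X + tan B = cos (X - B) / (sin X * cos B)"
  using assms by (simp add: cot_def tan_def cos_diff field_simps)

lemma I1_base:
  assumes c: "cos \<phi> \<noteq> 0" "cos C \<noteq> 0" and s: "sin (C + \<phi>) \<noteq> 0"
  shows "cot (C + \<phi>) / (cos \<phi>)^2 = (1 / (cos C)^2) * (tan \<phi> + cot (C + \<phi>)) - tan C / (cos \<phi>)^2"
proof -
  have A: "cot (C + \<phi>) + tan C = cos \<phi> / (sin (C + \<phi>) * cos C)"
    using cot_plus_tan[OF s c(2)] by simp
  have B: "cot (C + \<phi>) + tan \<phi> = cos C / (sin (C + \<phi>) * cos \<phi>)"
    using cot_plus_tan[OF s c(1)] by simp
  have "cot (C + \<phi>) / (cos \<phi>)^2 = (cot (C + \<phi>) + tan C) / (cos \<phi>)^2 - tan C / (cos \<phi>)^2"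
    by (simp add: add_divide_distrib)
  also have "(cot (C + \<phi>) + tan C) / (cos \<phi>)^2 = (1 / (cos C)^2) * (cot (C + \<phi>) + tan \<phi>)"
    unfolding A B using c s by (simp add: field_simps power2_eq_square)
  finally show ?thesis by (simp add: add.commute)
qed

lemma I1:
  fixes e x C :: real
  assumes e: "e = 1 \<or> e = -1" and c: "cos x \<noteq> 0" "cos C \<noteq> 0"
  shows "cot (C + e * x) / (cos x)^2 = (1 / (cos C)^2) * (e * tan x + cot (C + e * x)) - tan C / (cos x)^2
           + (if sin (C + e * x) = 0 then 2 * tan C / (cos C)^2 else 0)"
proof (cases "sin (C + e * x) = 0")
  case False
  from e show ?thesis
  proof
    assume e1: "e = 1"
    show ?thesis using I1_base[OF c(1) c(2)] False e1 by simp
  next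
    assume e1: "e = -1"
    have "cos (- x) \<noteq> 0" using c by simp
    from I1_base[OF this c(2)] False e1 show ?thesis by simp
  qed
next
  case True
  then obtain m :: int where m: "C + e * x = of_int m * pi" by (auto simp: sin_zero_iff_int2)
  have ct: "cot (C + e * x) = 0" using True by (simp add: cot_def)
  have tx: "e * tan x = - tan C" and cx: "(cos x)^2 = (cos C)^2"
  proof -
    have ex: "e * x = - C + of_int m * pi" using m by simp
    have "tan (e * x) = - tan C" unfolding ex by (simp only: tan_periodic_int tan_minus)
    moreover have "tan (e * x) = e * tan x" using e by auto
    ultimately show "e * tan x = - tan C" by simp
    have "(cos (e * x))^2 = (cos C)^2" unfolding ex cos_sq_per by simp
    moreover have "cos (e * x) = cos x" using e by auto
    ultimately show "(cos x)^2 = (cos C)^2" by simp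
  qed
  show ?thesis unfolding ct using True tx cx by (simp add: field_simps)
qed

lemma T2: assumes "cos u \<noteq> 0" shows "cot u / (cos u)^2 = cot u + tan u"
proof (cases "sin u = 0")
  case True then show ?thesis by (simp add: cot_def tan_def)
next
  case False
  then show ?thesis using assms sin_cos_squared_add[of u]
    by (simp add: cot_def tan_def field_simps power2_eq_square)
qed

lemma T3: assumes "cos u \<noteq> 0" shows "tan u * cot u = (if sin u = 0 then 0 else 1)"
  using assms by (simp add: cot_def tan_def)

lemma T4:
  assumes cz: "cos z \<noteq> 0" and ca: "cos a \<noteq> 0" and s: "sin (z + a) \<noteq> 0"
  shows "tan z * cot (z + a) = 1 - tan a * tan z - tan a * cot (z + a)"
proof -
  have h1: "tan z + tan a = sin (z + a) / (cos z * cos a)"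
    using cz ca by (simp add: tan_def sin_add field_simps)
  have h2: "1 - tan a * tan z = cos (z + a) / (cos z * cos a)"
    using cz ca by (simp add: tan_def cos_add field_simps)
  have "tan z * cot (z + a) = (tan z + tan a) * cot (z + a) - tan a * cot (z + a)"
    by (simp add: algebra_simps)
  also have "(tan z + tan a) * cot (z + a) = cos (z + a) / (cos z * cos a)"
    unfolding h1 using s by (simp add: cot_def)
  finally show ?thesis unfolding h2[symmetric] .
qed

lemma T5:
  assumes cz: "cos z \<noteq> 0" and cza: "cos (z + a) \<noteq> 0" and sa: "sin a \<noteq> 0" and ca: "cos a \<noteq> 0"
  shows "tan z * tan (z + a) = cot a * (tan (z + a) - tan z) - 1"
proof -
  have h1: "tan (z + a) - tan z = sin a / (cos (z + a) * cos z)"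
    using cz cza sin_diff[of "z + a" z] by (simp add: tan_def field_simps)
  have h2: "1 + tan z * tan (z + a) = cos a / (cos (z + a) * cos z)"
    using cz cza cos_diff[of "z + a" z] by (simp add: tan_def field_simps)
  have "cot a * (tan (z + a) - tan z) = cos a / (cos (z + a) * cos z)"
    unfolding h1 using sa by (simp add: cot_def)
  then have "cot a * (tan (z + a) - tan z) = 1 + tan z * tan (z + a)" using h2 by simp
  then show ?thesis by (simp add: algebra_simps)
qed

lemma T7: assumes "cos u \<noteq> 0" shows "1 / (cos u)^2 = 1 + (tan u)^2"
  using assms sin_cos_squared_add[of u] by (simp add: tan_def field_simps power2_eq_square)


lemma split0: "0 < (p::int) \<Longrightarrow> (\<Sum>j\<in>{0..<p}. f j) = f 0 + (\<Sum>j\<in>{1..<p}. f j)"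
proof -
  assume "0 < p"
  then have "{0..<p} = insert 0 {1..<p}" by auto
  then show ?thesis by simp
qed

lemma sum_const1: "1 \<le> (p::int) \<Longrightarrow> (\<Sum>j\<in>{1..<p}. (c::real)) = (of_int p - 1) * c"
  by simp

locale PQ =
  fixes p q k e :: int
  assumes p3: "p \<ge> 3" and q3: "q \<ge> 3" and po: "odd p" and qo: "odd q" and cop: "coprime p q"
    and qk: "q = k*p + e" and e: "e = 1 \<or> e = -1"
begin

lemma p0: "p \<noteq> 0" and q0: "q \<noteq> 0" and pq0: "p * q \<noteq> 0" using p3 q3 by auto

lemma cz: "cos (pi * of_int m / of_int q) \<noteq> 0" by (rule cos_odd_ne[OF qo refl])
lemma ca: "cos (pi * of_int j / of_int p) \<noteq> 0" by (rule cos_odd_ne[OF po refl])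
lemma cpz: "cos (of_int p * (pi * of_int m / of_int q)) \<noteq> 0" by (rule cos_odd_ne[OF qo, of _ "p*m"]) simp
lemma cqa: "cos (of_int q * (pi * of_int j / of_int p)) \<noteq> 0" by (rule cos_odd_ne[OF po, of _ "q*j"]) simp
lemma cza: "cos (pi * of_int m / of_int q + pi * of_int j / of_int p) \<noteq> 0"
proof (rule cos_odd_ne[of "p*q" _ "p*m + q*j"])
  show "odd (p*q)" using po qo by simp
  show "pi * of_int m / of_int q + pi * of_int j / of_int p = pi * of_int (p * m + q * j) / of_int (p * q)"
    using p0 q0 by (simp add: field_simps)
qed

lemma sz: "sin (pi * of_int m / of_int q) = 0 \<longleftrightarrow> q dvd m" by (rule sin_dvd_iff[OF q0])
lemma sa: "sin (pi * of_int j / of_int p) = 0 \<longleftrightarrow> p dvd j" by (rule sin_dvd_iff[OF p0])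
lemma spz: "sin (of_int p * (pi * of_int m / of_int q)) = 0 \<longleftrightarrow> q dvd m"
proof -
  have eq: "of_int p * (pi * of_int m / of_int q) = pi * of_int (p*m) / of_int q" by (simp add: algebra_simps)
  have "sin (of_int p * (pi * of_int m / of_int q)) = 0 \<longleftrightarrow> q dvd p * m"
    unfolding eq by (rule sin_dvd_iff[OF q0])
  also have "\<dots> \<longleftrightarrow> q dvd m" using cop by (simp add: coprime_commute coprime_dvd_mult_right_iff)
  finally show ?thesis .
qed
lemma sqa: "sin (of_int q * (pi * of_int j / of_int p)) = 0 \<longleftrightarrow> p dvd j"
proof -
  have eq: "of_int q * (pi * of_int j / of_int p) = pi * of_int (q*j) / of_int p" by (simp add: algebra_simps)
  have "sin (of_int q * (pi * of_int j / of_int p)) = 0 \<longleftrightarrow> p dvd q * j"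
    unfolding eq by (rule sin_dvd_iff[OF p0])
  also have "\<dots> \<longleftrightarrow> p dvd j" using cop by (simp add: coprime_dvd_mult_right_iff)
  finally show ?thesis .
qed
lemma sza:
  assumes "j \<in> {1..<p}"
  shows "sin (pi * of_int m / of_int q + pi * of_int j / of_int p) \<noteq> 0"
proof
  assume a: "sin (pi * of_int m / of_int q + pi * of_int j / of_int p) = 0"
  have eq: "pi * of_int m / of_int q + pi * of_int j / of_int p = pi * of_int (p * m + q * j) / of_int (p * q)"
    using p0 q0 by (simp add: field_simps)
  have "p * q dvd p*m + q*j" using a unfolding eq by (simp only: sin_dvd_iff[OF pq0])
  then have "p dvd p*m + q*j" by (meson dvd_mult_left)
  then have "p dvd q*j" by (simp add: dvd_add_right_iff)
  then have "p dvd j" using cop by (simp add: coprime_dvd_mult_right_iff)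
  then show False using assms zdvd_not_zless by auto
qed

lemma qa_eq: "of_int q * (pi * of_int j / of_int p) = e * (pi * of_int j / of_int p) + of_int (k*j) * pi"
  using p0 unfolding qk by (simp add: field_simps)

lemma cot_e: "cot (real_of_int e * x) = real_of_int e * cot x" using e by auto
lemma tan_e: "tan (real_of_int e * x) = real_of_int e * tan x" using e by auto

lemma cot_qa: "cot (of_int q * (pi * of_int j / of_int p)) = e * cot (pi * of_int j / of_int p)"
  unfolding qa_eq cot_per cot_e ..
lemma tan_qa: "tan (of_int q * (pi * of_int j / of_int p)) = e * tan (pi * of_int j / of_int p)"
  unfolding qa_eq tan_periodic_int tan_e ..

lemma qpos: "0 < q" and ppos: "0 < p" using p3 q3 by auto
lemma pm1: "real (nat (p - 1)) = of_int p - 1" and qm1: "real (nat (q - 1)) = of_int q - 1" using p3 q3 by auto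

lemma Z1: "(\<Sum>m\<in>{0..<q}. tan (pi * of_int m / of_int q)) = 0"
  using K2i[OF qo qpos, of 0] by simp

lemma Z2: "(\<Sum>m\<in>{0..<q}. 1 / (cos (pi * of_int m / of_int q))^2) = (of_int q)^2"
  using K3i[OF qo qpos, of 0] by simp

lemma Z3: "(\<Sum>m\<in>{0..<q}. (tan (pi * of_int m / of_int q))^2) = (of_int q)^2 - of_int q"
proof -
  have "(\<Sum>m\<in>{0..<q}. (tan (pi * of_int m / of_int q))^2) = (\<Sum>m\<in>{0..<q}. 1 / (cos (pi * of_int m / of_int q))^2 - 1)"
    by (rule sum.cong) (simp_all add: T7[OF cz])
  also have "\<dots> = (of_int q)^2 - of_int q" using Z2 qpos by (simp add: sum_subtractf)
  finally show ?thesis .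
qed

lemma Z3p: "(\<Sum>j\<in>{0..<p}. (tan (pi * of_int j / of_int p))^2) = (of_int p)^2 - of_int p"
proof -
  have "(\<Sum>j\<in>{0..<p}. (tan (pi * of_int j / of_int p))^2) = (\<Sum>j\<in>{0..<p}. 1 / (cos (pi * of_int j / of_int p))^2 - 1)"
    by (rule sum.cong) (simp_all add: T7[OF ca])
  also have "\<dots> = (of_int p)^2 - of_int p" using K3i[OF po ppos, of 0] ppos by (simp add: sum_subtractf)
  finally show ?thesis .
qed

lemma tan_mod: "tan (pi * of_int x / of_int d) = tan (pi * of_int (x mod d) / of_int d)" if "d \<noteq> 0" for d x
proof -
  have "x = x mod d + d * (x div d)" by simp
  then have "real_of_int x = of_int (x mod d) + of_int d * of_int (x div d)" by (metis of_int_add of_int_mult)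
  then have "pi * of_int x / of_int d = pi * of_int (x mod d) / of_int d + of_int (x div d) * pi"
    using that by (simp add: field_simps)
  then show ?thesis by simp
qed

lemma cot_mod: "cot (pi * of_int x / of_int d) = cot (pi * of_int (x mod d) / of_int d)" if "d \<noteq> 0" for d x
proof -
  have "x = x mod d + d * (x div d)" by simp
  then have "real_of_int x = of_int (x mod d) + of_int d * of_int (x div d)" by (metis of_int_add of_int_mult)
  then have "pi * of_int x / of_int d = pi * of_int (x mod d) / of_int d + of_int (x div d) * pi"
    using that by (simp add: field_simps)
  then show ?thesis by (simp add: cot_per)
qed

lemma Z4: "(\<Sum>m\<in>{0..<q}. (tan (pi * of_int m / of_int q))^3) = 0"
proof (rule odd_sum_zero[OF qpos])
  show "(tan (pi * of_int x / of_int q))^3 = (tan (pi * of_int (x mod q) / of_int q))^3" for x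
    by (rule arg_cong[where f="\<lambda>t. t^3"], rule tan_mod[OF q0])
  show "(tan (pi * of_int (- x) / of_int q))^3 = - ((tan (pi * of_int x / of_int q))^3)" for x
    by simp
qed

lemma Z5: "j \<in> {1..<p} \<Longrightarrow> (\<Sum>m\<in>{0..<q}. cot (pi * of_int m / of_int q + pi * of_int j / of_int p)) = e * of_int q * cot (pi * of_int j / of_int p)"
proof -
  assume j: "j \<in> {1..<p}"
  have ns: "sin (of_int q * (pi * of_int j / of_int p)) \<noteq> 0" using sqa j zdvd_not_zless by auto
  have "(\<Sum>m\<in>{0..<q}. cot (pi * of_int m / of_int q + pi * of_int j / of_int p)) = (\<Sum>m\<in>{0..<q}. cot (pi * of_int j / of_int p + pi * of_int m / of_int q))"
    by (simp add: add.commute)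
  also have "\<dots> = of_int q * cot (of_int q * (pi * of_int j / of_int p))" by (rule K1i[OF qpos ns])
  finally show ?thesis using cot_qa[of j] by simp
qed

lemma Z6: "(\<Sum>m\<in>{0..<q}. tan (pi * of_int m / of_int q + pi * of_int j / of_int p)) = e * of_int q * tan (pi * of_int j / of_int p)"
proof -
  have "(\<Sum>m\<in>{0..<q}. tan (pi * of_int m / of_int q + pi * of_int j / of_int p)) = (\<Sum>m\<in>{0..<q}. tan (pi * of_int j / of_int p + pi * of_int m / of_int q))"
    by (simp add: add.commute)
  also have "\<dots> = of_int q * tan (of_int q * (pi * of_int j / of_int p))" by (rule K2i[OF qo qpos cqa])
  finally show ?thesis using tan_qa[of j] by simp
qed


lemma tan_zero_if: "q dvd m \<Longrightarrow> tan (pi * of_int m / of_int q) = 0"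
  using sz by (simp add: tan_def)

lemma ind_sum: "(\<Sum>m\<in>{0..<q}. (if q dvd m then 0 else (1::real))) = of_int q - 1"
proof -
  have "(\<Sum>m\<in>{1..<q}. (if q dvd m then 0 else (1::real))) = (\<Sum>m\<in>{1..<q}. 1)"
  proof (rule sum.cong[OF refl])
    fix x assume "x \<in> {1..<q}" then have "\<not> q dvd x" using zdvd_not_zless[of x q] by auto
    then show "(if q dvd x then 0 else (1::real)) = 1" by simp
  qed
  then show ?thesis using split0[OF qpos, of "\<lambda>m. (if q dvd m then 0 else (1::real))"] qpos by simp
qed

lemma expand_cot:
  assumes "g (tan (pi * of_int m / of_int q)) = 0 \<or> \<not> q dvd m"
  shows "g (tan (pi * of_int m / of_int q)) * cot (of_int p * (pi * of_int m / of_int q))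
     = (1 / of_int p) * (\<Sum>j\<in>{0..<p}. g (tan (pi * of_int m / of_int q)) * cot (pi * of_int m / of_int q + pi * of_int j / of_int p))"
proof (cases "q dvd m")
  case True
  then show ?thesis using assms by simp
next
  case False
  then have ns: "sin (of_int p * (pi * of_int m / of_int q)) \<noteq> 0" using spz by simp
  have "(\<Sum>j\<in>{0..<p}. cot (pi * of_int m / of_int q + pi * of_int j / of_int p)) = of_int p * cot (of_int p * (pi * of_int m / of_int q))"
    by (rule K1i[OF ppos ns])
  then show ?thesis using ppos by (simp add: sum_distrib_left[symmetric])
qed

lemma P1: "(\<Sum>m\<in>{0..<q}. tan (pi * of_int m / of_int q) * cot (of_int p * (pi * of_int m / of_int q)))
    = ((of_int q - 1) + (of_int p - 1) * (of_int q - of_int e * (of_int q :: real))) / of_int p"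
proof -
  let ?z = "\<lambda>m. pi * of_int m / of_int q" and ?a = "\<lambda>j. pi * of_int j / of_int p"
  have "(\<Sum>m\<in>{0..<q}. tan (?z m) * cot (of_int p * ?z m)) = (\<Sum>m\<in>{0..<q}. (1 / of_int p) * (\<Sum>j\<in>{0..<p}. tan (?z m) * cot (?z m + ?a j)))"
    by (rule sum.cong[OF refl], rule expand_cot[where g="\<lambda>x. x"]) (use tan_zero_if in blast)
  also have "\<dots> = (1 / of_int p) * (\<Sum>m\<in>{0..<q}. \<Sum>j\<in>{0..<p}. tan (?z m) * cot (?z m + ?a j))"
    by (simp only: sum_distrib_left)
  also have "\<dots> = (1 / of_int p) * (\<Sum>j\<in>{0..<p}. \<Sum>m\<in>{0..<q}. tan (?z m) * cot (?z m + ?a j))"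
    by (rule arg_cong[where f="\<lambda>x. (1 / of_int p) * x"], rule sum.swap)
  also have "(\<Sum>j\<in>{0..<p}. \<Sum>m\<in>{0..<q}. tan (?z m) * cot (?z m + ?a j)) = (of_int q - 1) + (of_int p - 1) * (of_int q - of_int e * (of_int q :: real))"
  proof -
    have i0: "(\<Sum>m\<in>{0..<q}. tan (?z m) * cot (?z m + ?a 0)) = of_int q - 1"
    proof -
      have "(\<Sum>m\<in>{0..<q}. tan (?z m) * cot (?z m + ?a 0)) = (\<Sum>m\<in>{0..<q}. (if q dvd m then 0 else (1::real)))"
        by (rule sum.cong) (simp_all add: T3[OF cz] sz)
      then show ?thesis using ind_sum by simp
    qed
    have ij: "(\<Sum>m\<in>{0..<q}. tan (?z m) * cot (?z m + ?a j)) = of_int q - of_int e * (of_int q :: real)" if j: "j \<in> {1..<p}" for j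
    proof -
      have sa': "sin (?a j) \<noteq> 0" using sa j zdvd_not_zless by auto
      have "(\<Sum>m\<in>{0..<q}. tan (?z m) * cot (?z m + ?a j)) = (\<Sum>m\<in>{0..<q}. 1 - tan (?a j) * tan (?z m) - tan (?a j) * cot (?z m + ?a j))"
        by (rule sum.cong) (simp_all add: T4[OF cz ca sza[OF j]])
      also have "\<dots> = of_int q - tan (?a j) * (\<Sum>m\<in>{0..<q}. tan (?z m)) - tan (?a j) * (\<Sum>m\<in>{0..<q}. cot (?z m + ?a j))"
        using qpos by (simp add: sum_subtractf sum_distrib_left)
      also have "\<dots> = of_int q - of_int e * (of_int q :: real) * (tan (?a j) * cot (?a j))"
        using Z1 Z5[OF j] by simp
      also have "tan (?a j) * cot (?a j) = 1" using sa' ca[of j] by (simp add: tan_def cot_def)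
      finally show ?thesis by simp
    qed
    have "(\<Sum>j\<in>{1..<p}. \<Sum>m\<in>{0..<q}. tan (?z m) * cot (?z m + ?a j)) = (\<Sum>j\<in>{1..<p}. of_int q - of_int e * (of_int q :: real))"
      by (rule sum.cong) (simp_all add: ij)
    then show ?thesis by (subst split0[OF ppos]) (use i0 pm1 in simp)
  qed
  finally show ?thesis by simp
qed


lemma P2: "(\<Sum>m\<in>{0..<q}. tan (pi * of_int m / of_int q) * tan (of_int p * (pi * of_int m / of_int q)))
    = (((of_int q)^2 - of_int q) + (of_int p - 1) * (of_int e * of_int q - (of_int q :: real))) / of_int p"
proof -
  let ?z = "\<lambda>m. pi * of_int m / of_int q" and ?a = "\<lambda>j. pi * of_int j / of_int p"
  have ex: "tan (?z m) * tan (of_int p * ?z m) = (1 / of_int p) * (\<Sum>j\<in>{0..<p}. tan (?z m) * tan (?z m + ?a j))" for m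
  proof -
    have "(\<Sum>j\<in>{0..<p}. tan (?z m + ?a j)) = of_int p * tan (of_int p * ?z m)"
      by (rule K2i[OF po ppos cpz])
    then show ?thesis using ppos by (simp add: sum_distrib_left[symmetric])
  qed
  have "(\<Sum>m\<in>{0..<q}. tan (?z m) * tan (of_int p * ?z m)) = (\<Sum>m\<in>{0..<q}. (1 / of_int p) * (\<Sum>j\<in>{0..<p}. tan (?z m) * tan (?z m + ?a j)))"
    by (rule sum.cong[OF refl], rule ex)
  also have "\<dots> = (1 / of_int p) * (\<Sum>m\<in>{0..<q}. \<Sum>j\<in>{0..<p}. tan (?z m) * tan (?z m + ?a j))"
    by (simp only: sum_distrib_left)
  also have "\<dots> = (1 / of_int p) * (\<Sum>j\<in>{0..<p}. \<Sum>m\<in>{0..<q}. tan (?z m) * tan (?z m + ?a j))"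
    by (rule arg_cong[where f="\<lambda>x. (1 / of_int p) * x"], rule sum.swap)
  also have "(\<Sum>j\<in>{0..<p}. \<Sum>m\<in>{0..<q}. tan (?z m) * tan (?z m + ?a j)) = ((of_int q)^2 - of_int q) + (of_int p - 1) * (of_int e * of_int q - (of_int q :: real))"
  proof -
    have i0: "(\<Sum>m\<in>{0..<q}. tan (?z m) * tan (?z m + ?a 0)) = (of_int q)^2 - of_int q"
      using Z3 by (simp add: power2_eq_square)
    have ij: "(\<Sum>m\<in>{0..<q}. tan (?z m) * tan (?z m + ?a j)) = of_int e * of_int q - (of_int q :: real)" if j: "j \<in> {1..<p}" for j
    proof -
      have sa': "sin (?a j) \<noteq> 0" using sa j zdvd_not_zless by auto
      have "(\<Sum>m\<in>{0..<q}. tan (?z m) * tan (?z m + ?a j)) = (\<Sum>m\<in>{0..<q}. cot (?a j) * (tan (?z m + ?a j) - tan (?z m)) - 1)"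
        by (rule sum.cong) (simp_all add: T5[OF cz cza sa' ca])
      also have "\<dots> = cot (?a j) * ((\<Sum>m\<in>{0..<q}. tan (?z m + ?a j)) - (\<Sum>m\<in>{0..<q}. tan (?z m))) - of_int q"
        using qpos by (simp add: sum_subtractf sum_distrib_left[symmetric])
      also have "\<dots> = of_int e * of_int q * (tan (?a j) * cot (?a j)) - of_int q"
        using Z1 Z6[of j] by (simp add: algebra_simps)
      also have "tan (?a j) * cot (?a j) = 1" using sa' ca[of j] by (simp add: tan_def cot_def)
      finally show ?thesis by simp
    qed
    have "(\<Sum>j\<in>{1..<p}. \<Sum>m\<in>{0..<q}. tan (?z m) * tan (?z m + ?a j)) = (\<Sum>j\<in>{1..<p}. of_int e * of_int q - (of_int q :: real))"
      by (rule sum.cong) (simp_all add: ij)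
    then show ?thesis by (subst split0[OF ppos]) (use i0 pm1 in simp)
  qed
  finally show ?thesis by simp
qed

end

context PQ begin
lemma cube_identity:
  fixes X K t :: real
  assumes h: "X * K = 1 - t * X - t * K"
  shows "X^3 * K = (1 + t^2) * X^2 + (- t) * X^3 + (- t - t^3) * X + t^2 + (- (t^3)) * K"
proof -
  have "X^2 * K = X * (X * K)" by (simp add: power2_eq_square)
  also have "\<dots> = X * (1 - t * X - t * K)" using h by simp
  also have "\<dots> = X - t * X^2 - t * (X * K)" by (simp add: algebra_simps power2_eq_square)
  also have "\<dots> = X - t * X^2 - t * (1 - t * X - t * K)" using h by simp
  finally have h2: "X^2 * K = X - t * X^2 - t * (1 - t * X - t * K)" .
  have "X^3 * K = X^2 * (X * K)" by (simp add: power3_eq_cube power2_eq_square)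
  also have "\<dots> = X^2 - t * X^3 - t * (X^2 * K)" unfolding h by (simp add: algebra_simps power3_eq_cube power2_eq_square)
  also have "\<dots> = (1 + t^2) * X^2 + (- t) * X^3 + (- t - t^3) * X + t^2 + (- (t^3)) * K"
    unfolding h2 by (simp add: algebra_simps power3_eq_cube power2_eq_square)
  finally show ?thesis .
qed

lemma P3: "(\<Sum>m\<in>{0..<q}. (tan (pi * of_int m / of_int q))^3 * cot (of_int p * (pi * of_int m / of_int q)))
    = (((of_int q)^2 - of_int q) + ((of_int q)^2 - of_int q) * (of_int p - 1)
        + ((of_int q)^2 - of_int q + (1 - of_int e) * of_int q) * ((of_int p)^2 - (of_int p :: real))) / of_int p"
proof -
  let ?z = "\<lambda>m. pi * of_int m / of_int q" and ?a = "\<lambda>j. pi * of_int j / of_int p"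
  have "(\<Sum>m\<in>{0..<q}. (tan (?z m))^3 * cot (of_int p * ?z m)) = (\<Sum>m\<in>{0..<q}. (1 / of_int p) * (\<Sum>j\<in>{0..<p}. (tan (?z m))^3 * cot (?z m + ?a j)))"
    by (rule sum.cong[OF refl], rule expand_cot[where g="\<lambda>x. x^3"]) (auto simp: tan_zero_if)
  also have "\<dots> = (1 / of_int p) * (\<Sum>m\<in>{0..<q}. \<Sum>j\<in>{0..<p}. (tan (?z m))^3 * cot (?z m + ?a j))"
    by (simp only: sum_distrib_left)
  also have "\<dots> = (1 / of_int p) * (\<Sum>j\<in>{0..<p}. \<Sum>m\<in>{0..<q}. (tan (?z m))^3 * cot (?z m + ?a j))"
    by (rule arg_cong[where f="\<lambda>x. (1 / of_int p) * x"], rule sum.swap)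
  also have "(\<Sum>j\<in>{0..<p}. \<Sum>m\<in>{0..<q}. (tan (?z m))^3 * cot (?z m + ?a j)) = ((of_int q)^2 - of_int q) + ((of_int q)^2 - of_int q) * (of_int p - 1)
        + ((of_int q)^2 - of_int q + (1 - of_int e) * of_int q) * ((of_int p)^2 - (of_int p :: real))"
  proof -
    have i0: "(\<Sum>m\<in>{0..<q}. (tan (?z m))^3 * cot (?z m + ?a 0)) = (of_int q)^2 - of_int q"
    proof -
      have "(\<Sum>m\<in>{0..<q}. (tan (?z m))^3 * cot (?z m + ?a 0)) = (\<Sum>m\<in>{0..<q}. (tan (?z m))^2)"
      proof (rule sum.cong[OF refl])
        fix m
        have "(tan (?z m))^3 * cot (?z m) = (tan (?z m))^2 * (tan (?z m) * cot (?z m))"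
          by (simp add: power3_eq_cube power2_eq_square)
        also have "\<dots> = (tan (?z m))^2" using T3[OF cz, of m] by (auto simp: tan_def)
        finally show "(tan (?z m))^3 * cot (?z m + ?a 0) = (tan (?z m))^2" by simp
      qed
      then show ?thesis using Z3 by simp
    qed
    have ij: "(\<Sum>m\<in>{0..<q}. (tan (?z m))^3 * cot (?z m + ?a j)) = ((of_int q)^2 - of_int q) * (1 + (tan (?a j))^2) + (1 - of_int e) * of_int q * (tan (?a j))^2" if j: "j \<in> {1..<p}" for j
    proof -
      have sa': "sin (?a j) \<noteq> 0" using sa j zdvd_not_zless by auto
      let ?t = "tan (?a j)"
      have "(\<Sum>m\<in>{0..<q}. (tan (?z m))^3 * cot (?z m + ?a j)) = (\<Sum>m\<in>{0..<q}. (1 + ?t^2) * (tan (?z m))^2 + (- ?t) * (tan (?z m))^3 + (- ?t - ?t^3) * tan (?z m) + ?t^2 + (- (?t^3)) * cot (?z m + ?a j))"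
        by (rule sum.cong[OF refl], rule cube_identity, rule T4[OF cz ca sza[OF j]])
      also have "\<dots> = (1 + ?t^2) * (\<Sum>m\<in>{0..<q}. (tan (?z m))^2) + (- ?t) * (\<Sum>m\<in>{0..<q}. (tan (?z m))^3) + (- ?t - ?t^3) * (\<Sum>m\<in>{0..<q}. tan (?z m)) + of_int q * ?t^2 + (- (?t^3)) * (\<Sum>m\<in>{0..<q}. cot (?z m + ?a j))"
        using qpos by (simp add: sum.distrib sum_subtractf sum_negf sum_distrib_left)
      also have "\<dots> = (1 + ?t^2) * ((of_int q)^2 - of_int q) + of_int q * ?t^2 - of_int e * of_int q * (?t^2 * (?t * cot (?a j)))"
        unfolding Z3 Z4 Z1 Z5[OF j] by (simp add: algebra_simps power3_eq_cube power2_eq_square)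
      also have "?t * cot (?a j) = 1" using sa' ca[of j] by (simp add: tan_def cot_def)
      finally show ?thesis by (simp add: algebra_simps)
    qed
    have s2: "(\<Sum>j\<in>{1..<p}. (tan (?a j))^2) = (of_int p)^2 - of_int p"
      using Z3p by (subst (asm) split0[OF ppos]) simp
    have "(\<Sum>j\<in>{1..<p}. \<Sum>m\<in>{0..<q}. (tan (?z m))^3 * cot (?z m + ?a j)) = (\<Sum>j\<in>{1..<p}. ((of_int q)^2 - of_int q) * (1 + (tan (?a j))^2) + (1 - of_int e) * of_int q * (tan (?a j))^2)"
      by (rule sum.cong) (simp_all add: ij)
    also have "\<dots> = ((of_int q)^2 - of_int q) * (of_int p - 1) + ((of_int q)^2 - of_int q + (1 - of_int e) * of_int q) * (\<Sum>j\<in>{1..<p}. (tan (?a j))^2)"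
    proof -
      let ?A = "(of_int q)^2 - (of_int q :: real)" and ?B = "(1 - of_int e) * (of_int q :: real)"
      have "(\<Sum>j\<in>{1..<p}. ?A * (1 + (tan (?a j))^2) + ?B * (tan (?a j))^2) = (\<Sum>j\<in>{1..<p}. ?A + (?A + ?B) * (tan (?a j))^2)"
        by (rule sum.cong) (simp_all add: algebra_simps)
      also have "\<dots> = (\<Sum>j\<in>{1..<p}. ?A) + (?A + ?B) * (\<Sum>j\<in>{1..<p}. (tan (?a j))^2)"
        by (simp add: sum.distrib sum_distrib_left)
      finally show ?thesis using pm1 by (simp add: algebra_simps)
    qed
    finally show ?thesis unfolding s2 by (subst split0[OF ppos]) (use i0 in simp)
  qed
  finally show ?thesis by simp
qed


lemma Sa: "(\<Sum>m\<in>{0..<q}. cot (of_int p * (pi * of_int m / of_int q)) * tan (of_int p * (pi * of_int m / of_int q)) / (cos (pi * of_int m / of_int q))^2)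
   = (of_int q)^2 - 1"
proof -
  let ?z = "\<lambda>m. pi * of_int m / of_int q"
  have "(\<Sum>m\<in>{0..<q}. cot (of_int p * ?z m) * tan (of_int p * ?z m) / (cos (?z m))^2)
      = (\<Sum>m\<in>{0..<q}. (if q dvd m then 0 else 1 / (cos (?z m))^2))"
  proof (rule sum.cong[OF refl])
    fix m
    have "cot (of_int p * ?z m) * tan (of_int p * ?z m) = (if q dvd m then 0 else 1)"
      using T3[OF cpz, of m] spz[of m] by (simp add: mult.commute)
    then show "cot (of_int p * ?z m) * tan (of_int p * ?z m) / (cos (?z m))^2 = (if q dvd m then 0 else 1 / (cos (?z m))^2)"
      by simp
  qed
  also have "\<dots> = (\<Sum>m\<in>{1..<q}. 1 / (cos (?z m))^2)"
  proof -
    have "(\<Sum>m\<in>{1..<q}. (if q dvd m then 0 else 1 / (cos (?z m))^2)) = (\<Sum>m\<in>{1..<q}. 1 / (cos (?z m))^2)"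
    proof (rule sum.cong[OF refl])
      fix x assume "x \<in> {1..<q}" then have "\<not> q dvd x" using zdvd_not_zless[of x q] by auto
      then show "(if q dvd x then 0 else 1 / (cos (?z x))^2) = 1 / (cos (?z x))^2" by simp
    qed
    then show ?thesis by (subst split0[OF qpos]) simp
  qed
  also have "\<dots> = (of_int q)^2 - 1" using Z2 by (subst (asm) split0[OF qpos]) simp
  finally show ?thesis .
qed

lemma Sb: "(\<Sum>m\<in>{0..<q}. cot (of_int p * (pi * of_int m / of_int q)) * tan (pi * of_int m / of_int q) / (cos (of_int p * (pi * of_int m / of_int q)))^2)
   = (\<Sum>m\<in>{0..<q}. tan (pi * of_int m / of_int q) * cot (of_int p * (pi * of_int m / of_int q)))
   + (\<Sum>m\<in>{0..<q}. tan (pi * of_int m / of_int q) * tan (of_int p * (pi * of_int m / of_int q)))"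
proof -
  let ?z = "\<lambda>m. pi * of_int m / of_int q"
  have "(\<Sum>m\<in>{0..<q}. cot (of_int p * ?z m) * tan (?z m) / (cos (of_int p * ?z m))^2)
     = (\<Sum>m\<in>{0..<q}. tan (?z m) * cot (of_int p * ?z m) + tan (?z m) * tan (of_int p * ?z m))"
  proof (rule sum.cong[OF refl])
    fix m
    have "cot (of_int p * ?z m) * tan (?z m) / (cos (of_int p * ?z m))^2 = tan (?z m) * (cot (of_int p * ?z m) / (cos (of_int p * ?z m))^2)"
      by simp
    also have "\<dots> = tan (?z m) * (cot (of_int p * ?z m) + tan (of_int p * ?z m))" unfolding T2[OF cpz] ..
    finally show "cot (of_int p * ?z m) * tan (?z m) / (cos (of_int p * ?z m))^2 = tan (?z m) * cot (of_int p * ?z m) + tan (?z m) * tan (of_int p * ?z m)"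
      by (simp add: algebra_simps)
  qed
  then show ?thesis by (simp add: sum.distrib)
qed

lemma sc_aux:
  fixes X Y W :: real
  assumes "1 / W^2 = 1 + X^2"
  shows "Y * X / W^2 = X * Y + X^3 * Y"
proof -
  have "Y * X / W^2 = Y * X * (1 / W^2)" by simp
  also have "\<dots> = Y * X * (1 + X^2)" unfolding assms ..
  also have "\<dots> = X * Y + X^3 * Y" by (simp add: algebra_simps power3_eq_cube power2_eq_square)
  finally show ?thesis .
qed

lemma Sc: "(\<Sum>m\<in>{0..<q}. cot (of_int p * (pi * of_int m / of_int q)) * tan (pi * of_int m / of_int q) / (cos (pi * of_int m / of_int q))^2)
   = (\<Sum>m\<in>{0..<q}. tan (pi * of_int m / of_int q) * cot (of_int p * (pi * of_int m / of_int q)))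
   + (\<Sum>m\<in>{0..<q}. (tan (pi * of_int m / of_int q))^3 * cot (of_int p * (pi * of_int m / of_int q)))"
proof -
  let ?z = "\<lambda>m. pi * of_int m / of_int q"
  have "(\<Sum>m\<in>{0..<q}. cot (of_int p * ?z m) * tan (?z m) / (cos (?z m))^2)
     = (\<Sum>m\<in>{0..<q}. tan (?z m) * cot (of_int p * ?z m) + (tan (?z m))^3 * cot (of_int p * ?z m))"
    by (rule sum.cong[OF refl], rule sc_aux, rule T7[OF cz])
  then show ?thesis by (simp add: sum.distrib)
qed


lemma e_real: "real_of_int e = 1 \<or> real_of_int e = -1" using e by auto

lemma main_point:
  "cot (pi * of_int n / of_int p) * cot (pi * of_int n / of_int q) / (cos (pi * of_int n / of_int (p*q)))^2
   = cot (pi * of_int n / of_int q) *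
     ((1 / (cos (of_int k * (pi * of_int n / of_int q)))^2) * (of_int e * tan (pi * of_int n / of_int (p*q)) + cot (pi * of_int n / of_int p))
      - tan (of_int k * (pi * of_int n / of_int q)) / (cos (pi * of_int n / of_int (p*q)))^2
      + (if p dvd n then 2 * tan (of_int k * (pi * of_int n / of_int q)) / (cos (of_int k * (pi * of_int n / of_int q)))^2 else 0))"
proof -
  let ?x = "pi * of_int n / of_int (p*q)" and ?C = "of_int k * (pi * of_int n / of_int q)"
  have cx: "cos ?x \<noteq> 0" by (rule cos_odd_ne[of "p*q" _ n]) (use po qo in simp_all)
  have cC: "cos ?C \<noteq> 0" by (rule cos_odd_ne[OF qo, of _ "k*n"]) simp
  have eq: "?C + of_int e * ?x = pi * of_int n / of_int p"
  proof -
    have "?C + of_int e * ?x = pi * of_int n * (of_int k * of_int p + of_int e) / (of_int p * of_int q)"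
      using p0 q0 by (simp add: field_simps)
    also have "of_int k * of_int p + of_int e = (of_int q :: real)" unfolding qk by simp
    also have "pi * of_int n * of_int q / (of_int p * of_int q) = pi * of_int n / of_int p" using q0 by simp
    finally show ?thesis .
  qed
  have sn: "sin (pi * of_int n / of_int p) = 0 \<longleftrightarrow> p dvd n" by (rule sa)
  have F: "cot (pi * of_int n / of_int p) / (cos ?x)^2 = (1 / (cos ?C)^2) * (of_int e * tan ?x + cot (pi * of_int n / of_int p)) - tan ?C / (cos ?x)^2
           + (if p dvd n then 2 * tan ?C / (cos ?C)^2 else 0)"
    using I1[OF e_real cx cC] unfolding eq sn .
  have L: "cot (pi * of_int n / of_int p) * cot (pi * of_int n / of_int q) / (cos ?x)^2 = cot (pi * of_int n / of_int q) * (cot (pi * of_int n / of_int p) / (cos ?x)^2)"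
    by simp
  show ?thesis unfolding L F ..
qed

lemma ind_p: "(\<Sum>i\<in>{0..<p}. (if p dvd (b + q*i) then 1 else (0::real))) = 1"
proof -
  have "(\<Sum>i\<in>{0..<p}. (if p dvd (b + q*i) then 1 else (0::real))) = (\<Sum>i\<in>{0..<p}. (if p dvd i then 1 else (0::real)))"
    by (rule reindex_mod[OF ppos]) (use cop in \<open>simp_all add: coprime_commute dvd_mod_iff\<close>)
  also have "\<dots> = 1"
  proof -
    have "(\<Sum>i\<in>{1..<p}. (if p dvd i then 1 else (0::real))) = 0"
    proof (rule sum.neutral, rule ballI)
      fix x assume "x \<in> {1..<p}" then have "\<not> p dvd x" using zdvd_not_zless[of x p] by auto
      then show "(if p dvd x then 1 else (0::real)) = 0" by simp
    qed
    then show ?thesis by (subst split0[OF ppos]) simp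
  qed
  finally show ?thesis .
qed

lemma cot_p_sum: "(\<Sum>i\<in>{0..<p}. cot (pi * of_int (b + q*i) / of_int p)) = 0"
proof -
  have "(\<Sum>i\<in>{0..<p}. cot (pi * of_int (b + q*i) / of_int p)) = (\<Sum>i\<in>{0..<p}. cot (pi * of_int i / of_int p))"
    by (rule reindex_mod[OF ppos, where f="\<lambda>j. cot (pi * of_int j / of_int p)"]) (use cop in \<open>simp add: coprime_commute\<close>, rule cot_mod[OF p0])
  also have "\<dots> = 0"
    by (rule odd_sum_zero[OF ppos], rule cot_mod[OF p0], simp)
  finally show ?thesis .
qed

end


lemma gs_bound1:
  fixes b i p q :: int
  assumes "0 \<le> b" "b < q" "0 \<le> i" "i < p"
  shows "b + q*i < p*q"
proof -
  have "q * i \<le> q * (p - 1)" using assms by (intro mult_left_mono) auto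
  then show ?thesis using assms by (simp add: algebra_simps)
qed

lemma gs_bound2:
  fixes n p q :: int
  assumes q: "0 < q" and n: "n < p*q"
  shows "n div q < p"
proof (rule ccontr)
  assume "\<not> n div q < p"
  then have "q * p \<le> q * (n div q)" using q by (intro mult_left_mono) auto
  also have "\<dots> \<le> n"
  proof -
    have "n = q * (n div q) + n mod q" by simp
    moreover have "0 \<le> n mod q" using q by simp
    ultimately show ?thesis by linarith
  qed
  finally show False using n by (simp add: mult.commute)
qed

lemma group_sum:
  fixes f :: "int \<Rightarrow> 'a::comm_monoid_add"
  assumes p: "0 < p" and q: "0 < q"
  shows "(\<Sum>n\<in>{0..<p*q}. f n) = (\<Sum>b\<in>{0..<q}. \<Sum>i\<in>{0..<p}. f (b + q*i))"
proof -
  have "(\<Sum>b\<in>{0..<q}. \<Sum>i\<in>{0..<p}. f (b + q*i)) = (\<Sum>(b,i)\<in>{0..<q}\<times>{0..<p}. f (b + q*i))"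
    by (rule sum.cartesian_product)
  also have "\<dots> = (\<Sum>n\<in>{0..<p*q}. f n)"
    by (rule sum.reindex_bij_witness[where j="\<lambda>(b,i). b + q*i" and i="\<lambda>n. (n mod q, n div q)"])
       (use p q gs_bound1 gs_bound2 in \<open>auto simp: pos_imp_zdiv_nonneg_iff\<close>)
  finally show ?thesis by simp
qed

lemma lin_aux:
  fixes c C2 e T K tk X2 :: real
  shows "c * ((1/C2)*(e*T + K) - tk/X2 + (if P then 2*tk/C2 else 0))
     = (c*e/C2)*T + (c/C2)*K - (c*tk)*(1/X2) + (c*2*tk/C2)*(if P then 1 else 0)"
  by (simp add: algebra_simps)

lemma lin_sum:
  fixes f g h u :: "int \<Rightarrow> real"
  shows "(\<Sum>i\<in>A. a * f i + b * g i - c * h i + d * u i) = a * sum f A + b * sum g A - c * sum h A + d * sum u A"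
  by (simp add: sum.distrib sum_subtractf sum_distrib_left)

lemma ymod: "d \<noteq> 0 \<Longrightarrow> pi * of_int x / of_int d = pi * of_int (x mod d) / of_int d + of_int (x div d) * pi"
proof -
  assume d: "d \<noteq> 0"
  have "x = x mod d + d * (x div d)" by simp
  then have "real_of_int x = of_int (x mod d) + of_int d * of_int (x div d)" by (metis of_int_add of_int_mult)
  then show ?thesis using d by (simp add: field_simps)
qed

context PQ begin

lemma inner:
  "(\<Sum>i\<in>{0..<p}. cot (pi * of_int (b + q*i) / of_int p) * cot (pi * of_int (b + q*i) / of_int q) / (cos (pi * of_int (b + q*i) / of_int (p*q)))^2)
   = cot (pi * of_int b / of_int q) * (of_int e * of_int p * tan (pi * of_int b / of_int q) / (cos (of_int k * (pi * of_int b / of_int q)))^2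
       - (of_int p)^2 * tan (of_int k * (pi * of_int b / of_int q)) / (cos (pi * of_int b / of_int q))^2
       + 2 * tan (of_int k * (pi * of_int b / of_int q)) / (cos (of_int k * (pi * of_int b / of_int q)))^2)"
proof -
  define y where "y = pi * of_int b / of_int q"
  define \<theta> where "\<theta> = pi * of_int b / of_int (p*q)"
  have tm: "cot (pi * of_int (b + q*i) / of_int p) * cot (pi * of_int (b + q*i) / of_int q) / (cos (pi * of_int (b + q*i) / of_int (p*q)))^2
     = (cot y * of_int e / (cos (of_int k * y))^2) * tan (\<theta> + pi * of_int i / of_int p)
       + (cot y / (cos (of_int k * y))^2) * cot (pi * of_int (b + q*i) / of_int p)
       - (cot y * tan (of_int k * y)) * (1 / (cos (\<theta> + pi * of_int i / of_int p))^2)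
       + (cot y * 2 * tan (of_int k * y) / (cos (of_int k * y))^2) * (if p dvd (b + q*i) then 1 else 0)" for i
  proof -
    have e1: "pi * of_int (b + q*i) / of_int q = y + of_int i * pi" unfolding y_def using q0 by (simp add: field_simps)
    have cq: "cot (pi * of_int (b + q*i) / of_int q) = cot y" unfolding e1 cot_per ..
    have e2: "of_int k * (pi * of_int (b + q*i) / of_int q) = of_int k * y + of_int (k*i) * pi" unfolding e1 by (simp add: algebra_simps)
    have tk: "tan (of_int k * (pi * of_int (b + q*i) / of_int q)) = tan (of_int k * y)" unfolding e2 tan_periodic_int ..
    have ck: "(cos (of_int k * (pi * of_int (b + q*i) / of_int q)))^2 = (cos (of_int k * y))^2" unfolding e2 cos_sq_per ..
    have xe: "pi * of_int (b + q*i) / of_int (p*q) = \<theta> + pi * of_int i / of_int p" unfolding \<theta>_def using p0 q0 by (simp add: field_simps)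
    show ?thesis using main_point[of "b + q*i"] unfolding cq tk ck xe lin_aux by simp
  qed
  have pt: "of_int p * \<theta> = y" unfolding \<theta>_def y_def using p0 by simp
  have cy: "cos (of_int p * \<theta>) \<noteq> 0" unfolding pt y_def by (rule cz)
  have sT: "(\<Sum>i\<in>{0..<p}. tan (\<theta> + pi * of_int i / of_int p)) = of_int p * tan y"
    using K2i[OF po ppos cy] unfolding pt .
  have sS: "(\<Sum>i\<in>{0..<p}. 1 / (cos (\<theta> + pi * of_int i / of_int p))^2) = (of_int p)^2 * (1 / (cos y)^2)"
    using K3i[OF po ppos cy] unfolding pt .
  have "(\<Sum>i\<in>{0..<p}. cot (pi * of_int (b + q*i) / of_int p) * cot (pi * of_int (b + q*i) / of_int q) / (cos (pi * of_int (b + q*i) / of_int (p*q)))^2)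
     = (cot y * of_int e / (cos (of_int k * y))^2) * (of_int p * tan y) + (cot y / (cos (of_int k * y))^2) * 0
       - (cot y * tan (of_int k * y)) * ((of_int p)^2 * (1 / (cos y)^2)) + (cot y * 2 * tan (of_int k * y) / (cos (of_int k * y))^2) * 1"
    unfolding tm lin_sum sT sS cot_p_sum ind_p ..
  also have "\<dots> = cot y * (of_int e * of_int p * tan y / (cos (of_int k * y))^2
       - (of_int p)^2 * tan (of_int k * y) / (cos y)^2 + 2 * tan (of_int k * y) / (cos (of_int k * y))^2)"
    by (simp add: algebra_simps)
  finally show ?thesis unfolding y_def .
qed


definition Fb :: "int \<Rightarrow> real" where
  "Fb x = cot (pi * of_int x / of_int q) * (of_int e * of_int p * tan (pi * of_int x / of_int q) / (cos (of_int k * (pi * of_int x / of_int q)))^2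
       - (of_int p)^2 * tan (of_int k * (pi * of_int x / of_int q)) / (cos (pi * of_int x / of_int q))^2
       + 2 * tan (of_int k * (pi * of_int x / of_int q)) / (cos (of_int k * (pi * of_int x / of_int q)))^2)"

lemma kshift: "of_int k * (U + of_int j * pi) = of_int k * U + of_int (k*j) * pi"
  by (simp add: algebra_simps)

lemma Fb_per: "Fb x = Fb (x mod q)"
proof -
  have e1: "pi * of_int x / of_int q = pi * of_int (x mod q) / of_int q + of_int (x div q) * pi" by (rule ymod[OF q0])
  show ?thesis unfolding Fb_def e1 kshift cot_per tan_periodic_int cos_sq_per ..
qed

lemma fb_aux:
  fixes c E P T tz CZ CP :: real
  shows "c * (E * P * T / CZ - P^2 * (- (E * tz)) / CP + 2 * (- (E * tz)) / CZ)
     = E * P * (c * T / CZ) + E * P^2 * (c * tz / CP) - 2 * E * (c * tz / CZ)"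
  by (simp add: algebra_simps)

lemma Fb_pm:
  "Fb (p * m) = of_int e * of_int p * (cot (of_int p * (pi * of_int m / of_int q)) * tan (of_int p * (pi * of_int m / of_int q)) / (cos (pi * of_int m / of_int q))^2)
     + of_int e * (of_int p)^2 * (cot (of_int p * (pi * of_int m / of_int q)) * tan (pi * of_int m / of_int q) / (cos (of_int p * (pi * of_int m / of_int q)))^2)
     - 2 * of_int e * (cot (of_int p * (pi * of_int m / of_int q)) * tan (pi * of_int m / of_int q) / (cos (pi * of_int m / of_int q))^2)"
proof -
  define z where "z = pi * of_int m / of_int q"
  have y: "pi * of_int (p*m) / of_int q = of_int p * z" unfolding z_def by simp
  have ky: "of_int k * (of_int p * z) = - (of_int e * z) + of_int m * pi"
  proof -
    have kp: "of_int k * of_int p = (of_int q - of_int e :: real)" unfolding qk by simp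
    have "of_int k * (of_int p * z) = (of_int k * of_int p) * z" by simp
    also have "\<dots> = of_int q * z - of_int e * z" unfolding kp by (simp add: algebra_simps)
    finally have "of_int k * (of_int p * z) = of_int q * z - of_int e * z" .
    also have "of_int q * z = of_int m * pi" unfolding z_def using q0 by simp
    finally show ?thesis by simp
  qed
  have tk: "tan (of_int k * (of_int p * z)) = - (of_int e * tan z)"
    unfolding ky tan_periodic_int tan_minus tan_e ..
  have ck: "(cos (of_int k * (of_int p * z)))^2 = (cos z)^2"
  proof -
    have "(cos (of_int k * (of_int p * z)))^2 = (cos (- (of_int e * z)))^2" unfolding ky cos_sq_per ..
    also have "cos (- (of_int e * z)) = cos z" using e by auto
    finally show ?thesis .
  qed
  show ?thesis unfolding Fb_def y tk ck fb_aux z_def[symmetric] ..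
qed

lemma S_full:
  "(\<Sum>n\<in>{0..<p*q}. cot (pi * of_int n / of_int p) * cot (pi * of_int n / of_int q) / (cos (pi * of_int n / of_int (p*q)))^2)
    = 2 / of_int p * ((of_int p)^2 - 1) * (of_int q - of_int e)"
proof -
  let ?t = "\<lambda>n. cot (pi * of_int n / of_int p) * cot (pi * of_int n / of_int q) / (cos (pi * of_int n / of_int (p*q)))^2"
  let ?SA = "\<lambda>m. cot (of_int p * (pi * of_int m / of_int q)) * tan (of_int p * (pi * of_int m / of_int q)) / (cos (pi * of_int m / of_int q))^2"
  let ?SB = "\<lambda>m. cot (of_int p * (pi * of_int m / of_int q)) * tan (pi * of_int m / of_int q) / (cos (of_int p * (pi * of_int m / of_int q)))^2"
  let ?SC = "\<lambda>m. cot (of_int p * (pi * of_int m / of_int q)) * tan (pi * of_int m / of_int q) / (cos (pi * of_int m / of_int q))^2"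
  have "(\<Sum>n\<in>{0..<p*q}. ?t n) = (\<Sum>b\<in>{0..<q}. \<Sum>i\<in>{0..<p}. ?t (b + q*i))"
    by (rule group_sum[OF ppos qpos])
  also have "\<dots> = (\<Sum>b\<in>{0..<q}. Fb b)"
    by (rule sum.cong[OF refl]) (simp only: inner Fb_def)
  also have "\<dots> = (\<Sum>m\<in>{0..<q}. Fb (0 + p*m))"
    by (rule reindex_mod[where f=Fb and m=q and a=p and c=0, OF qpos cop Fb_per, symmetric])
  also have "\<dots> = (\<Sum>m\<in>{0..<q}. of_int e * of_int p * ?SA m + of_int e * (of_int p)^2 * ?SB m - 2 * of_int e * ?SC m)"
    by (rule sum.cong[OF refl]) (simp only: add_0_left Fb_pm)
  also have "\<dots> = of_int e * of_int p * (\<Sum>m\<in>{0..<q}. ?SA m) + of_int e * (of_int p)^2 * (\<Sum>m\<in>{0..<q}. ?SB m) - 2 * of_int e * (\<Sum>m\<in>{0..<q}. ?SC m)"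
    by (simp add: sum.distrib sum_subtractf sum_distrib_left)
  also have "\<dots> = of_int e * of_int p * ((of_int q)^2 - 1)
      + of_int e * (of_int p)^2 * (((of_int q - 1) + (of_int p - 1) * (of_int q - of_int e * (of_int q :: real))) / of_int p
                                    + (((of_int q)^2 - of_int q) + (of_int p - 1) * (of_int e * of_int q - (of_int q :: real))) / of_int p)
      - 2 * of_int e * (((of_int q - 1) + (of_int p - 1) * (of_int q - of_int e * (of_int q :: real))) / of_int p
            + (((of_int q)^2 - of_int q) + ((of_int q)^2 - of_int q) * (of_int p - 1)
        + ((of_int q)^2 - of_int q + (1 - of_int e) * of_int q) * ((of_int p)^2 - (of_int p :: real))) / of_int p)"
    unfolding Sa Sb Sc P1 P2 P3 ..
  also have "\<dots> = 2 / of_int p * ((of_int p)^2 - 1) * (of_int q - of_int e)"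
  proof -
    have pr: "real_of_int p \<noteq> 0" using p0 by simp
    from e_real show ?thesis
    proof
      assume "real_of_int e = 1" then show ?thesis using pr by (simp add: field_simps power2_eq_square)
    next
      assume "real_of_int e = -1" then show ?thesis using pr by (simp add: field_simps power2_eq_square)
    qed
  qed
  finally show ?thesis .
qed

end

theorem mainTheorem14:
  fixes p q :: int
  assumes "p \<ge> 3" and "q \<ge> 3" and "odd p" and "odd q" and "coprime p q"
    and "[q = 1] (mod p) \<or> [q = -1] (mod p)"
  defines "S \<equiv> (\<Sum>n\<in>{n\<in>{1..p*q-1}. \<not> p dvd n \<and> \<not> q dvd n}.
      cot (pi * of_int n / of_int p) * cot (pi * of_int n / of_int q)
        / (cos (pi * of_int n / of_int (p*q)))\<^sup>2)"
  shows "([q = 1] (mod p) \<longrightarrow> S = 2 / of_int p * (of_int p ^ 2 - 1) * (of_int q - 1))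
     \<and> ([q = -1] (mod p) \<longrightarrow> S = 2 / of_int p * (of_int p ^ 2 - 1) * (of_int q + 1))"
proof -
  let ?t = "\<lambda>n. cot (pi * of_int n / of_int p) * cot (pi * of_int n / of_int q) / (cos (pi * of_int n / of_int (p*q)))^2"
  have p0: "p \<noteq> 0" and q0: "q \<noteq> 0" using assms by auto
  have S_eq: "S = (\<Sum>n\<in>{0..<p*q}. ?t n)"
    unfolding S_def
  proof (rule sum.mono_neutral_left)
    show "finite {0..<p*q}" by simp
    show "{n \<in> {1..p * q - 1}. \<not> p dvd n \<and> \<not> q dvd n} \<subseteq> {0..<p*q}" by auto
    show "\<forall>i\<in>{0..<p * q} - {n \<in> {1..p * q - 1}. \<not> p dvd n \<and> \<not> q dvd n}. ?t i = 0"
    proof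
      fix i assume i: "i \<in> {0..<p * q} - {n \<in> {1..p * q - 1}. \<not> p dvd n \<and> \<not> q dvd n}"
      then have "p dvd i \<or> q dvd i" by (cases "i = 0") auto
      then show "?t i = 0"
      proof
        assume "p dvd i"
        then have "sin (pi * of_int i / of_int p) = 0" using sin_dvd_iff[OF p0] by simp
        then show ?thesis by (simp add: cot_def)
      next
        assume "q dvd i"
        then have "sin (pi * of_int i / of_int q) = 0" using sin_dvd_iff[OF q0] by simp
        then show ?thesis by (simp add: cot_def)
      qed
    qed
  qed
  have gen: "S = 2 / of_int p * ((of_int p)^2 - 1) * (of_int q - of_int e)"
    if "q = k*p + e" and "e = 1 \<or> e = -1" for k e
  proof -
    have "PQ p q k e" by (unfold_locales) (use assms that in auto)
    then show ?thesis unfolding S_eq by (rule PQ.S_full)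
  qed
  show ?thesis
  proof (intro conjI impI)
    assume "[q = 1] (mod p)"
    then have "p dvd q - 1" by (simp add: cong_iff_dvd_diff)
    then obtain k where "q - 1 = p * k" by (auto elim: dvdE)
    then have "q = k*p + 1" by (simp add: algebra_simps)
    from gen[OF this] show "S = 2 / of_int p * (of_int p ^ 2 - 1) * (of_int q - 1)" by simp
  next
    assume "[q = -1] (mod p)"
    then have "p dvd q - (-1)" by (simp add: cong_iff_dvd_diff)
    then obtain k where "q - (-1) = p * k" by (auto elim: dvdE)
    then have "q = k*p + (-1)" by (simp add: algebra_simps)
    from gen[OF this] show "S = 2 / of_int p * (of_int p ^ 2 - 1) * (of_int q + 1)" by simp
  qed
qed

end
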